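(* Let $\mathcal P$ be a convex family of probability measures on a measurable space $(\Omega,\mathcal F)$ and let $x'\in\mathrm{ca}(\mathcal P)'$. Suppose there exists an $\mathcal F$-measurable function $h$ with $x'(\mu)=\int h\,d\mu$ for all $\mu\in\mathrm{ca}(\mathcal P)$. Then $h$ is unique up to $\mathcal P$-q.s. equality and $h\in\mathbb L^\infty(\mathcal P)$.
   Context: $\mathrm{ca}(\mathcal P)$ is the normed space of finite signed measures $\mu$ on $\mathcal F$ with $|\mu|\ll P$ for some $P\in\mathcal P$, with the total variation norm; $\mathrm{ca}(\mathcal P)'$ is its dual. A set is $\mathcal P$-polar if contained in some $N\in\mathcal F$ with $P(N)=0$ for all $P\in\mathcal P$; $\mathcal P$-q.s. means outside a polar set. $\mathbb L^\infty(\mathcal P)$ is the space of measurable functions bounded $\mathcal P$-q.s., modulo $\mathcal P$-q.s. equality. *)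

theory Defs
  imports "HOL-Probability.Probability"
begin

definition finite_signed_measure :: "'a measure \<Rightarrow> ('a set \<Rightarrow> real) \<Rightarrow> bool" where
  "finite_signed_measure M \<mu> \<longleftrightarrow>
     \<mu> {} = 0 \<and> (\<forall>A. A \<notin> sets M \<longrightarrow> \<mu> A = 0) \<and>
     (\<forall>A :: nat \<Rightarrow> 'a set. range A \<subseteq> sets M \<longrightarrow> disjoint_family A \<longrightarrow>
        (\<lambda>i. \<mu> (A i)) sums \<mu> (\<Union>i. A i))"

definition tv :: "'a measure \<Rightarrow> ('a set \<Rightarrow> real) \<Rightarrow> 'a set \<Rightarrow> real" where
  "tv M \<mu> A = Sup {(\<Sum>B\<in>C. \<bar>\<mu> B\<bar>) | C. finite C \<and> C \<subseteq> sets M \<and> disjoint C \<and> \<Union>C \<subseteq> A}"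

definition tv_norm :: "'a measure \<Rightarrow> ('a set \<Rightarrow> real) \<Rightarrow> real" where
  "tv_norm M \<mu> = tv M \<mu> (space M)"

definition pos_part :: "'a measure \<Rightarrow> ('a set \<Rightarrow> real) \<Rightarrow> 'a measure" where
  "pos_part M \<mu> = measure_of (space M) (sets M) (\<lambda>A. ennreal ((tv M \<mu> A + \<mu> A) / 2))"

definition neg_part :: "'a measure \<Rightarrow> ('a set \<Rightarrow> real) \<Rightarrow> 'a measure" where
  "neg_part M \<mu> = measure_of (space M) (sets M) (\<lambda>A. ennreal ((tv M \<mu> A - \<mu> A) / 2))"

definition signed_integrable :: "'a measure \<Rightarrow> ('a set \<Rightarrow> real) \<Rightarrow> ('a \<Rightarrow> real) \<Rightarrow> bool" where
  "signed_integrable M \<mu> h \<longleftrightarrow> integrable (pos_part M \<mu>) h \<and> integrable (neg_part M \<mu>) h"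

definition signed_integral :: "'a measure \<Rightarrow> ('a set \<Rightarrow> real) \<Rightarrow> ('a \<Rightarrow> real) \<Rightarrow> real" where
  "signed_integral M \<mu> h = integral\<^sup>L (pos_part M \<mu>) h - integral\<^sup>L (neg_part M \<mu>) h"

definition convex_prob_family :: "'a measure \<Rightarrow> 'a measure set \<Rightarrow> bool" where
  "convex_prob_family M \<P> \<longleftrightarrow>
     (\<forall>P\<in>\<P>. prob_space P \<and> sets P = sets M) \<and>
     (\<forall>P\<in>\<P>. \<forall>Q\<in>\<P>. \<forall>t::real. 0 \<le> t \<and> t \<le> 1 \<longrightarrow>
        measure_of (space M) (sets M) (\<lambda>A. ennreal t * emeasure P A + ennreal (1 - t) * emeasure Q A) \<in> \<P>)"

definition ca :: "'a measure \<Rightarrow> 'a measure set \<Rightarrow> ('a set \<Rightarrow> real) set" where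
  "ca M \<P> = {\<mu>. finite_signed_measure M \<mu> \<and>
     (\<exists>P\<in>\<P>. \<forall>A\<in>sets M. emeasure P A = 0 \<longrightarrow> tv M \<mu> A = 0)}"

definition ca_dual :: "'a measure \<Rightarrow> 'a measure set \<Rightarrow> (('a set \<Rightarrow> real) \<Rightarrow> real) set" where
  "ca_dual M \<P> = {x. (\<forall>\<mu>\<in>ca M \<P>. \<forall>\<nu>\<in>ca M \<P>. \<forall>a b::real.
        x (\<lambda>A. a * \<mu> A + b * \<nu> A) = a * x \<mu> + b * x \<nu>) \<and>
     (\<exists>C. \<forall>\<mu>\<in>ca M \<P>. \<bar>x \<mu>\<bar> \<le> C * tv_norm M \<mu>)}"

definition polar :: "'a measure \<Rightarrow> 'a measure set \<Rightarrow> 'a set \<Rightarrow> bool" where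
  "polar M \<P> S \<longleftrightarrow> (\<exists>N\<in>sets M. S \<subseteq> N \<and> (\<forall>P\<in>\<P>. emeasure P N = 0))"

definition in_Linf :: "'a measure \<Rightarrow> 'a measure set \<Rightarrow> ('a \<Rightarrow> real) \<Rightarrow> bool" where
  "in_Linf M \<P> h \<longleftrightarrow> h \<in> borel_measurable M \<and>
     (\<exists>C. polar M \<P> {\<omega>\<in>space M. \<bar>h \<omega>\<bar> > C})"

definition represents :: "'a measure \<Rightarrow> 'a measure set \<Rightarrow> (('a set \<Rightarrow> real) \<Rightarrow> real) \<Rightarrow> ('a \<Rightarrow> real) \<Rightarrow> bool" where
  "represents M \<P> x h \<longleftrightarrow> h \<in> borel_measurable M \<and>
     (\<forall>\<mu>\<in>ca M \<P>. signed_integrable M \<mu> h \<and> x \<mu> = signed_integral M \<mu> h)"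

end

theory Submission imports Defs begin

lemma tv_measure:
  assumes fin: "finite_measure D" and sD: "sets D = sets M" and B: "B \<in> sets M"
  shows "tv M (measure D) B = measure D B"
proof -
  interpret finite_measure D by fact
  let ?S = "{(\<Sum>E\<in>C. \<bar>measure D E\<bar>) | C. finite C \<and> C \<subseteq> sets M \<and> disjoint C \<and> \<Union>C \<subseteq> B}"
  have "measure D B \<in> ?S"
    by (rule CollectI, rule exI[of _ "{B}"]) (auto simp: B disjoint_def)
  moreover have "s \<le> measure D B" if "s \<in> ?S" for s
  proof -
    from that obtain C where C: "finite C" "C \<subseteq> sets M" "disjoint C" "\<Union>C \<subseteq> B"
      and s: "s = (\<Sum>E\<in>C. \<bar>measure D E\<bar>)" by blast
    have "s = (\<Sum>E\<in>C. measure D E)" using s by simp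
    also have "\<dots> = measure D (\<Union>E\<in>C. E)"
      using C sD by (intro finite_measure_finite_Union[symmetric])
        (auto simp: disjoint_family_on_def disjoint_def)
    also have "\<dots> \<le> measure D B"
      using C sD B by (intro finite_measure_mono) auto
    finally show ?thesis .
  qed
  ultimately show ?thesis unfolding tv_def by (intro cSup_eq_maximum) auto
qed

lemma pos_part_measure:
  assumes fin: "finite_measure D" and sD: "sets D = sets M"
  shows "pos_part M (measure D) = D"
proof -
  interpret finite_measure D by fact
  have sp: "space D = space M" using sD by (rule sets_eq_imp_space_eq)
  have "pos_part M (measure D) = measure_of (space M) (sets M) (emeasure D)"
    unfolding pos_part_def
  proof (rule measure_of_eq)
    show "sets M \<subseteq> Pow (space M)" using sets.space_closed by auto
    fix a assume "a \<in> sigma_sets (space M) (sets M)"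
    then have a: "a \<in> sets M" by (simp add: sets.sigma_sets_eq)
    show "ennreal ((tv M (measure D) a + measure D a) / 2) = emeasure D a"
      using tv_measure[OF fin sD a] by (simp add: emeasure_eq_measure)
  qed
  then show ?thesis using measure_of_of_measure[of D] by (simp add: sp sD)
qed

lemma neg_part_measure:
  assumes fin: "finite_measure D" and sD: "sets D = sets M"
  shows "neg_part M (measure D) = null_measure D"
proof -
  interpret finite_measure D by fact
  have sp: "space D = space M" using sD by (rule sets_eq_imp_space_eq)
  have "neg_part M (measure D) = measure_of (space M) (sets M) (emeasure (null_measure D))"
    unfolding neg_part_def
  proof (rule measure_of_eq)
    show "sets M \<subseteq> Pow (space M)" using sets.space_closed by auto
    fix a assume "a \<in> sigma_sets (space M) (sets M)"
    then have a: "a \<in> sets M" by (simp add: sets.sigma_sets_eq)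
    show "ennreal ((tv M (measure D) a - measure D a) / 2) = emeasure (null_measure D) a"
      using tv_measure[OF fin sD a] by simp
  qed
  then show ?thesis using measure_of_of_measure[of "null_measure D"] by (simp add: sp sD)
qed

lemma measure_in_ca:
  assumes fin: "finite_measure D" and sD: "sets D = sets M" and P: "P \<in> \<P>"
    and ac: "\<And>A. A \<in> sets M \<Longrightarrow> emeasure P A = 0 \<Longrightarrow> emeasure D A = 0"
  shows "measure D \<in> ca M \<P>"
proof -
  interpret finite_measure D by fact
  have "finite_signed_measure M (measure D)"
    unfolding finite_signed_measure_def
    using finite_measure_UNION sD by (auto simp: measure_notin_sets)
  moreover have "tv M (measure D) A = 0" if "A \<in> sets M" "emeasure P A = 0" for A
    using tv_measure[OF fin sD that(1)] ac[OF that] by (simp add: measure_def)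
  ultimately show ?thesis unfolding ca_def using P by blast
qed

lemma signed_measure:
  assumes fin: "finite_measure D" and sD: "sets D = sets M"
    and "signed_integrable M (measure D) h"
  shows "integrable D h" "signed_integral M (measure D) h = integral\<^sup>L D h"
  using assms unfolding signed_integrable_def signed_integral_def
  by (simp_all add: pos_part_measure neg_part_measure)

lemma restr_rep:
  assumes cf: "convex_prob_family M \<P>" and P: "P \<in> \<P>" and A: "A \<in> sets M"
    and rep: "represents M \<P> x h"
  shows "integrable P (\<lambda>\<omega>. indicator A \<omega> * h \<omega>)"
    "x (measure (density P (indicator A))) = (\<integral>\<omega>. indicator A \<omega> * h \<omega> \<partial>P)"
    "measure (density P (indicator A)) \<in> ca M \<P>"
    "tv_norm M (measure (density P (indicator A))) = measure P A"
proof -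
  have ps: "prob_space P" and sP: "sets P = sets M" using cf P unfolding convex_prob_family_def by auto
  interpret prob_space P by fact
  have spP: "space P = space M" using sP by (rule sets_eq_imp_space_eq)
  have AP: "A \<in> sets P" using A sP by simp
  let ?D = "density P (indicator A)"
  have fin: "finite_measure ?D" by (rule finite_measure_restricted[OF AP])
  have sD: "sets ?D = sets M" using sP by simp
  have hm: "h \<in> borel_measurable P" using rep sP unfolding represents_def
    using measurable_cong_sets[OF sP refl] by blast
  have im: "indicator A \<in> borel_measurable P" using AP by simp
  show inca: "measure ?D \<in> ca M \<P>"
    by (rule measure_in_ca[OF fin sD P]) (metis emeasure_restricted AP sP emeasure_mono inf_le2 le_zero_eq)
  have si: "signed_integrable M (measure ?D) h" "x (measure ?D) = signed_integral M (measure ?D) h"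
    using rep inca unfolding represents_def by auto
  have "integrable ?D h" using signed_measure(1)[OF fin sD si(1)] .
  then show "integrable P (\<lambda>\<omega>. indicator A \<omega> * h \<omega>)"
    using integrable_density[OF hm im] by (simp add: ennreal_indicator)
  show "x (measure ?D) = (\<integral>\<omega>. indicator A \<omega> * h \<omega> \<partial>P)"
    using si(2) signed_measure(2)[OF fin sD si(1)] integral_density[OF hm im] by (simp add: ennreal_indicator)
  show "tv_norm M (measure ?D) = measure P A"
    unfolding tv_norm_def using tv_measure[OF fin sD sets.top[of M]]
    by (simp add: measure_restricted AP spP[symmetric] flip: sP)
qed

lemma null_from_int:
  fixes f :: "'a \<Rightarrow> real"
  assumes "prob_space P" and A: "A \<in> sets P" and int: "integrable P (\<lambda>\<omega>. indicator A \<omega> * f \<omega>)"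
    and pos: "\<And>\<omega>. \<omega> \<in> A \<Longrightarrow> f \<omega> > 0"
    and z: "(\<integral>\<omega>. indicator A \<omega> * f \<omega> \<partial>P) = 0"
  shows "AE \<omega> in P. \<omega> \<notin> A"
proof -
  have nn: "AE \<omega> in P. 0 \<le> indicator A \<omega> * f \<omega>"
    using pos by (auto simp: indicator_def less_imp_le)
  have "AE \<omega> in P. indicator A \<omega> * f \<omega> = 0"
    using integral_nonneg_eq_0_iff_AE[OF int nn] z by simp
  then show ?thesis
  proof eventually_elim
    fix \<omega> assume e: "indicator A \<omega> * f \<omega> = 0"
    show "\<omega> \<notin> A"
    proof
      assume w: "\<omega> \<in> A"
      then have "f \<omega> > 0" by (rule pos)
      with w e show False by simp
    qed
  qed
qed

lemma measure_zero_AE: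
  assumes "prob_space P" and A: "A \<in> sets P" and m: "measure P A = 0"
  shows "AE \<omega> in P. \<omega> \<notin> A"
proof -
  interpret prob_space P by fact
  have "A \<in> null_sets P" using A m by (simp add: emeasure_eq_measure null_sets_def)
  then show ?thesis by (rule AE_not_in)
qed

theorem lemma3p17:
  fixes M :: "'a measure" and \<P> :: "'a measure set"
    and x :: "('a set \<Rightarrow> real) \<Rightarrow> real" and h :: "'a \<Rightarrow> real"
  assumes "convex_prob_family M \<P>"
    and "x \<in> ca_dual M \<P>"
    and "represents M \<P> x h"
  shows "(\<forall>g. represents M \<P> x g \<longrightarrow> polar M \<P> {\<omega>\<in>space M. g \<omega> \<noteq> h \<omega>})
         \<and> in_Linf M \<P> h"
proof
  note cf = assms(1) and rep = assms(3)
  have hM[measurable]: "h \<in> borel_measurable M" using rep unfolding represents_def by simp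
  show "\<forall>g. represents M \<P> x g \<longrightarrow> polar M \<P> {\<omega>\<in>space M. g \<omega> \<noteq> h \<omega>}"
  proof (intro allI impI)
    fix g assume repg: "represents M \<P> x g"
    have gM[measurable]: "g \<in> borel_measurable M" using repg unfolding represents_def by simp
    let ?N = "{\<omega>\<in>space M. g \<omega> \<noteq> h \<omega>}"
    have NM: "?N \<in> sets M" by measurable
    have "emeasure P ?N = 0" if P: "P \<in> \<P>" for P
    proof -
      have ps: "prob_space P" and sP: "sets P = sets M" using cf P unfolding convex_prob_family_def by auto
      have spP: "space P = space M" using sP by (rule sets_eq_imp_space_eq)
      have one: "AE \<omega> in P. \<omega> \<notin> {\<omega>\<in>space M. f1 \<omega> > f2 \<omega>}"
        if r1: "represents M \<P> x f1" and r2: "represents M \<P> x f2" for f1 f2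
      proof -
        have [measurable]: "f1 \<in> borel_measurable M" "f2 \<in> borel_measurable M"
          using r1 r2 unfolding represents_def by auto
        let ?A = "{\<omega>\<in>space M. f1 \<omega> > f2 \<omega>}"
        have A: "?A \<in> sets M" by measurable
        note a1 = restr_rep[OF cf P A r1] and a2 = restr_rep[OF cf P A r2]
        have "(\<integral>\<omega>. indicator ?A \<omega> * (f1 \<omega> - f2 \<omega>) \<partial>P) =
              (\<integral>\<omega>. indicator ?A \<omega> * f1 \<omega> \<partial>P) - (\<integral>\<omega>. indicator ?A \<omega> * f2 \<omega> \<partial>P)"
          using a1(1) a2(1) by (simp add: right_diff_distrib)
        also have "\<dots> = 0" using a1(2) a2(2) by simp
        finally have z: "(\<integral>\<omega>. indicator ?A \<omega> * (f1 \<omega> - f2 \<omega>) \<partial>P) = 0" .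
        have int: "integrable P (\<lambda>\<omega>. indicator ?A \<omega> * (f1 \<omega> - f2 \<omega>))"
          using a1(1) a2(1) by (simp add: right_diff_distrib)
        show ?thesis by (rule null_from_int[OF ps _ int _ z]) (use A sP in auto)
      qed
      have "AE \<omega> in P. \<omega> \<notin> ?N"
        using one[OF repg rep] one[OF rep repg] by eventually_elim auto
      then show ?thesis using NM sP
        by (subst (asm) AE_iff_measurable[of ?N]) (auto simp: spP)
    qed
    then show "polar M \<P> ?N" unfolding polar_def using NM by blast
  qed
  from assms(2) obtain C where C: "\<And>\<mu>. \<mu> \<in> ca M \<P> \<Longrightarrow> \<bar>x \<mu>\<bar> \<le> C * tv_norm M \<mu>"
    unfolding ca_dual_def by blast
  define K where "K = max C 0 + 1"
  let ?N = "{\<omega>\<in>space M. \<bar>h \<omega>\<bar> > K}"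
  have A1M: "{\<omega>\<in>space M. h \<omega> > K} \<in> sets M" using hM borel_measurable_iff_greater by blast
  have A2M: "{\<omega>\<in>space M. h \<omega> < - K} \<in> sets M" using hM borel_measurable_iff_less by blast
  have "?N = {\<omega>\<in>space M. h \<omega> > K} \<union> {\<omega>\<in>space M. h \<omega> < - K}" by auto
  then have NM: "?N \<in> sets M" using A1M A2M by simp
  have "emeasure P ?N = 0" if P: "P \<in> \<P>" for P
  proof -
    have ps: "prob_space P" and sP: "sets P = sets M" using cf P unfolding convex_prob_family_def by auto
    interpret prob_space P by fact
    have spP: "space P = space M" using sP by (rule sets_eq_imp_space_eq)
    let ?A1 = "{\<omega>\<in>space M. h \<omega> > K}"
    let ?A2 = "{\<omega>\<in>space M. h \<omega> < - K}"
    have A1: "?A1 \<in> sets M" and A2: "?A2 \<in> sets M" using A1M A2M by blast+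
    have A1P: "?A1 \<in> sets P" and A2P: "?A2 \<in> sets P" using A1 A2 sP by simp_all
    note a1 = restr_rep[OF cf P A1 rep] and a2 = restr_rep[OF cf P A2 rep]
    have m1: "measure P ?A1 = 0"
    proof -
      have "(\<integral>\<omega>. indicator ?A1 \<omega> * K \<partial>P) \<le> (\<integral>\<omega>. indicator ?A1 \<omega> * h \<omega> \<partial>P)"
        using a1(1) A1P integrable_real_mult_indicator[OF A1P, of "\<lambda>_. K"]
        by (intro integral_mono) (auto simp: indicator_def less_imp_le mult.commute)
      then have "K * measure P ?A1 \<le> x (measure (density P (indicator ?A1)))"
        using a1(2) by (simp add: spP mult.commute)
      also have "\<dots> \<le> C * measure P ?A1" using C[OF a1(3)] a1(4) by simp
      also have "\<dots> \<le> max C 0 * measure P ?A1" by (intro mult_right_mono) auto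
      finally have "(max C 0 + 1) * measure P ?A1 \<le> max C 0 * measure P ?A1" unfolding K_def .
      then have "measure P ?A1 \<le> 0" by (simp add: distrib_right)
      then show ?thesis using measure_nonneg[of P "?A1"] by linarith
    qed
    have m2: "measure P ?A2 = 0"
    proof -
      have "(\<integral>\<omega>. indicator ?A2 \<omega> * h \<omega> \<partial>P) \<le> (\<integral>\<omega>. indicator ?A2 \<omega> * (-K) \<partial>P)"
        using a2(1) A2P integrable_real_mult_indicator[OF A2P, of "\<lambda>_. (-K)"]
        by (intro integral_mono) (auto simp: indicator_def less_imp_le mult.commute)
      then have "x (measure (density P (indicator ?A2))) \<le> - K * measure P ?A2"
        using a2(2) by (simp add: spP mult.commute)
      then have "K * measure P ?A2 \<le> \<bar>x (measure (density P (indicator ?A2)))\<bar>" by simp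
      also have "\<dots> \<le> C * measure P ?A2" using C[OF a2(3)] a2(4) by simp
      also have "\<dots> \<le> max C 0 * measure P ?A2" by (intro mult_right_mono) auto
      finally have "(max C 0 + 1) * measure P ?A2 \<le> max C 0 * measure P ?A2" unfolding K_def .
      then have "measure P ?A2 \<le> 0" by (simp add: distrib_right)
      then show ?thesis using measure_nonneg[of P "?A2"] by linarith
    qed
    have "AE \<omega> in P. \<omega> \<notin> ?N"
      using measure_zero_AE[OF ps A1P m1] measure_zero_AE[OF ps A2P m2]
      by eventually_elim auto
    then show ?thesis using NM sP
      by (subst (asm) AE_iff_measurable[of ?N]) (auto simp: spP)
  qed
  then have "polar M \<P> ?N" unfolding polar_def using NM by blast
  then show "in_Linf M \<P> h" unfolding in_Linf_def using hM by blast
qed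

end
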